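(* Let $k<n$ and let $G=[I_k\mid A]$ be a $k\times n$ binary matrix in systematic form, where $A$ is a $k\times(n-k)$ binary matrix whose $i$-th row is $g_i\in(\mathbb{F}_2)^{n-k}$. Let $\mathcal{C}\subseteq(\mathbb{F}_2)^n$ be the binary linear code spanned by the rows of $G$. Let $X_1,\dots,X_n$ be i.i.d. $\mathbb{F}_2$-valued random variables, and for $x\in\mathbb{F}_2$ write $P(X_1=x)=\tfrac12+v(x)$. Thus $v(0)=-v(1)$. Use the convention $v(\cdot)^0=1$ and $v(\cdot)^1=v(\cdot)$. Let $\bar Y=G(X_1,\dots,X_n)^T$. For $\gamma=(\gamma_1,\dots,\gamma_k)\in(\mathbb{F}_2)^k$ and $b=(b_1,\dots,b_n)\in(\mathbb{F}_2)^n$ of Hamming weight $W(b)$, define $$T(b,\gamma)=\frac{1}{2^{\,n-W(b)}}\sum_{\omega=(\omega_{k+1},\dots,\omega_n)\in(\mathbb{F}_2)^{n-k}}\ \prod_{i=1}^{k}v(\gamma_i+g_i\cdot\omega)^{b_i}\prod_{j=k+1}^{n}v(\omega_j)^{b_j},$$ where $g_i\cdot\omega$ denotes the standard dot product over $\mathbb{F}_2$. Then: (i) $P(\bar Y=\gamma)=\sum_{b\in(\mathbb{F}_2)^n}T(b,\gamma)$; (ii) $T(b,\gamma)=0$ for every $b\notin\mathcal{C}$ and every $\gamma$; (iii) $T(0,\gamma)=2^{-k}$. Consequently, $$P(\bar Y=\gamma)-\frac{1}{2^k}=\sum_{b\in\mathcal{C}\setminus\{0\}}T(b,\gamma)$$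 for every $\gamma\in(\mathbb{F}_2)^k$.
   Context: A binary matrix $G$ is in systematic form if its first $k$ columns form the $k\times k$ identity matrix $I_k$. The Hamming weight $W(b)$ of $b\in(\mathbb{F}_2)^n$ is the number of indices $i$ with $b_i=1$. *)

theory Defs
  imports "HOL-Probability.Probability" "HOL-Library.Z2"
begin

definition vecs :: "nat set \<Rightarrow> (nat \<Rightarrow> bit) set" where
  "vecs I = {b. \<forall>i. i \<notin> I \<longrightarrow> b i = 0}"

text \<open>Systematic form of a k x n matrix G (rows 1..k, columns 1..n): first k columns form I_k.\<close>
definition systematic :: "nat \<Rightarrow> (nat \<Rightarrow> nat \<Rightarrow> bit) \<Rightarrow> bool" where
  "systematic k G \<longleftrightarrow> (\<forall>i\<in>{1..k}. \<forall>j\<in>{1..k}. G i j = (if i = j then 1 else 0))"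

definition code :: "nat \<Rightarrow> nat \<Rightarrow> (nat \<Rightarrow> nat \<Rightarrow> bit) \<Rightarrow> (nat \<Rightarrow> bit) set" where
  "code k n G = {b \<in> vecs {1..n}. \<exists>c \<in> vecs {1..k}. \<forall>j\<in>{1..n}. b j = (\<Sum>i\<in>{1..k}. c i * G i j)}"

definition hweight :: "nat \<Rightarrow> (nat \<Rightarrow> bit) \<Rightarrow> nat" where
  "hweight n b = card {i\<in>{1..n}. b i = 1}"

definition bexp :: "bit \<Rightarrow> nat" where
  "bexp b = (if b = 1 then 1 else 0)"

text \<open>Row g_i of A = columns k+1..n of G, dotted with omega = (omega_{k+1},...,omega_n).\<close>
definition gdot :: "nat \<Rightarrow> nat \<Rightarrow> (nat \<Rightarrow> nat \<Rightarrow> bit) \<Rightarrow> nat \<Rightarrow> (nat \<Rightarrow> bit) \<Rightarrow> bit" where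
  "gdot k n G i \<omega> = (\<Sum>j\<in>{k+1..n}. G i j * \<omega> j)"

definition T :: "nat \<Rightarrow> nat \<Rightarrow> (nat \<Rightarrow> nat \<Rightarrow> bit) \<Rightarrow> (bit \<Rightarrow> real)
                 \<Rightarrow> (nat \<Rightarrow> bit) \<Rightarrow> (nat \<Rightarrow> bit) \<Rightarrow> real" where
  "T k n G v b \<gamma> = 1 / 2 ^ (n - hweight n b) *
     (\<Sum>\<omega>\<in>vecs {k+1..n}.
        (\<Prod>i\<in>{1..k}. v (\<gamma> i + gdot k n G i \<omega>) ^ bexp (b i)) *
        (\<Prod>j\<in>{k+1..n}. v (\<omega> j) ^ bexp (b j)))"

definition Ybar :: "nat \<Rightarrow> (nat \<Rightarrow> nat \<Rightarrow> bit) \<Rightarrow> (nat \<Rightarrow> 'a \<Rightarrow> bit) \<Rightarrow> nat \<Rightarrow> 'a \<Rightarrow> bit" where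
  "Ybar n G X i x = (\<Sum>j\<in>{1..n}. G i j * X j x)"

end

theory Submission
  imports Defs
begin


declare add_bit_eq_xor[simp del] mult_bit_eq_and[simp del]

lemma bit_cases_all: "P (0::bit) \<Longrightarrow> P 1 \<Longrightarrow> P x" by (cases x) auto

lemma bit_self_add[simp]: "(x::bit) + x = 0" by (cases x) auto

lemma bit_neq_add: "(x::bit) \<noteq> y \<Longrightarrow> x + y = 1" by (cases x; cases y) auto

definition ind :: "nat set \<Rightarrow> nat \<Rightarrow> bit" where "ind B = (\<lambda>i. if i \<in> B then 1 else 0)"

lemma bij_ind: "bij_betw ind (Pow I) (vecs I)"
  by (rule bij_betw_byWitness[where f'="\<lambda>b. {i\<in>I. b i = 1}"])
     (auto simp: ind_def vecs_def fun_eq_iff split: if_splits)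

lemma finite_vecs: "finite I \<Longrightarrow> finite (vecs I)"
  using bij_betw_finite[OF bij_ind] by auto

lemma card_vecs: "finite I \<Longrightarrow> card (vecs I) = 2 ^ card I"
  using bij_betw_same_card[OF bij_ind, of I] by (simp add: card_Pow)

lemma expand:
  fixes a :: "nat \<Rightarrow> real"
  assumes "finite I"
  shows "(\<Prod>t\<in>I. c + a t) = (\<Sum>b\<in>vecs I. \<Prod>t\<in>I. if b t = 1 then a t else c)"
proof -
  have "(\<Prod>t\<in>I. c + a t) = (\<Prod>t\<in>I. a t + c)" by (simp add: add.commute)
  also have "\<dots> = (\<Sum>B\<in>Pow I. (\<Prod>x\<in>B. a x) * (\<Prod>x\<in>I-B. c))"
    by (rule prod_add[OF assms])
  also have "\<dots> = (\<Sum>B\<in>Pow I. \<Prod>t\<in>I. if ind B t = 1 then a t else c)"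
  proof (rule sum.cong[OF refl])
    fix B assume B: "B \<in> Pow I"
    have "(\<Prod>t\<in>I. if ind B t = 1 then a t else c) = (\<Prod>t\<in>I. if t \<in> B then a t else c)"
      by (rule prod.cong) (auto simp: ind_def)
    also have "\<dots> = prod a (I \<inter> B) * prod (\<lambda>_. c) (I \<inter> - B)"
      using prod.If_cases[OF assms, of "\<lambda>t. t \<in> B" a "\<lambda>_. c"] by simp
    moreover have "I \<inter> B = B" "I \<inter> - B = I - B" using B by auto
    ultimately show "(\<Prod>x\<in>B. a x) * (\<Prod>x\<in>I-B. c) = (\<Prod>t\<in>I. if ind B t = 1 then a t else c)"
      by simp
  qed
  also have "\<dots> = (\<Sum>b\<in>vecs I. \<Prod>t\<in>I. if b t = 1 then a t else c)"
    using sum.reindex_bij_betw[OF bij_ind, of "\<lambda>b. \<Prod>t\<in>I. if b t = 1 then a t else c"] by simp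
  finally show ?thesis .
qed

lemma split_prod:
  fixes a :: "nat \<Rightarrow> real"
  assumes "finite I"
  shows "(\<Prod>t\<in>I. if b t = 1 then a t else 1/2) = 1 / 2 ^ card {t\<in>I. b t \<noteq> 1} * (\<Prod>t\<in>I. a t ^ bexp (b t))"
proof -
  have "(\<Prod>t\<in>I. if b t = 1 then a t else 1/2) = prod a (I \<inter> {t. b t = 1}) * prod (\<lambda>_. 1/2) (I \<inter> - {t. b t = 1})"
    by (rule prod.If_cases[OF assms])
  moreover have "(\<Prod>t\<in>I. a t ^ bexp (b t)) = (\<Prod>t\<in>I. if b t = 1 then a t else 1)"
    by (rule prod.cong) (auto simp: bexp_def)
  moreover have "(\<Prod>t\<in>I. if b t = 1 then a t else 1) = prod a (I \<inter> {t. b t = 1}) * prod (\<lambda>_. 1) (I \<inter> - {t. b t = 1})"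
    by (rule prod.If_cases[OF assms])
  moreover have "I \<inter> - {t. b t = 1} = {t\<in>I. b t \<noteq> 1}" by auto
  ultimately show ?thesis by (simp add: power_one_over)
qed

definition sg :: "bit \<Rightarrow> real" where "sg x = (if x = 0 then 1 else -1)"

lemma sg_add: "sg (x + y) = sg x * sg y"
  by (cases x; cases y) (auto simp: sg_def)

lemma sg_sum: "finite A \<Longrightarrow> sg (sum f A) = (\<Prod>i\<in>A. sg (f i))"
  by (induction A rule: finite_induct) (simp add: sg_def, simp add: sg_add)

lemma vshift:
  assumes "\<And>x. v (x + 1) = - v x"
  shows "v (x + d) ^ bexp beta = v x ^ bexp beta * sg (beta * d)"
  using assms by (cases d; cases beta) (auto simp: sg_def bexp_def)



lemma bit_add_eq0: "(x::bit) + y = 0 \<Longrightarrow> x = y" by (cases x; cases y) auto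

lemma zero_in_code: "(\<lambda>_. 0) \<in> code k n G"
  unfolding code_def vecs_def by (auto intro!: exI[of _ "\<lambda>_. 0"])

lemma code_sub: "code k n G \<subseteq> vecs {1..n}" unfolding code_def by auto

lemma not_code:
  assumes sys: "systematic k G" and kn: "k < n"
    and b: "b \<in> vecs {1..n}" "b \<notin> code k n G"
  shows "\<exists>j0\<in>{k+1..n}. b j0 + (\<Sum>i\<in>{1..k}. b i * G i j0) = 1"
proof (rule ccontr)
  assume neg: "\<not> ?thesis"
  have H: "\<forall>j\<in>{k+1..n}. b j = (\<Sum>i\<in>{1..k}. b i * G i j)"
  proof
    fix j assume "j \<in> {k+1..n}"
    with neg have "b j + (\<Sum>i\<in>{1..k}. b i * G i j) = 0" by auto
    then show "b j = (\<Sum>i\<in>{1..k}. b i * G i j)" by (rule bit_add_eq0)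
  qed
  define c where "c = (\<lambda>i. if i \<in> {1..k} then b i else 0)"
  have "c \<in> vecs {1..k}" by (simp add: c_def vecs_def)
  moreover have "\<forall>j\<in>{1..n}. b j = (\<Sum>i\<in>{1..k}. c i * G i j)"
  proof
    fix j assume j: "j \<in> {1..n}"
    show "b j = (\<Sum>i\<in>{1..k}. c i * G i j)"
    proof (cases "j \<le> k")
      case True
      have "(\<Sum>i\<in>{1..k}. c i * G i j) = (\<Sum>i\<in>{1..k}. if i = j then b j else 0)"
        by (rule sum.cong) (use sys True j in \<open>auto simp: c_def systematic_def\<close>)
      also have "\<dots> = b j" using True j by simp
      finally show ?thesis by simp
    next
      case False
      then have "(\<Sum>i\<in>{1..k}. c i * G i j) = (\<Sum>i\<in>{1..k}. b i * G i j)"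
        by (intro sum.cong) (auto simp: c_def)
      then show ?thesis using H False j by auto
    qed
  qed
  ultimately have "b \<in> code k n G" using b(1) unfolding code_def by blast
  with b(2) show False by blast
qed

lemma part2:
  assumes sys: "systematic k G" and kn: "k < n"
    and vv: "\<And>x. v (x + 1) = - v x"
    and b: "b \<in> vecs {1..n}" "b \<notin> code k n G"
  shows "T k n G v b \<gamma> = 0"
proof -
  obtain j0 where j0: "j0 \<in> {k+1..n}" "b j0 + (\<Sum>i\<in>{1..k}. b i * G i j0) = 1"
    using not_code[OF sys kn b] by blast
  define P where "P = (\<lambda>\<omega>. (\<Prod>i\<in>{1..k}. v (\<gamma> i + gdot k n G i \<omega>) ^ bexp (b i)) *
        (\<Prod>j\<in>{k+1..n}. v (\<omega> j) ^ bexp (b j)))"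
  define fl where "fl = (\<lambda>(w::nat\<Rightarrow>bit). w(j0 := w j0 + 1))"
  let ?V = "vecs {k+1..n}"
  have gd: "gdot k n G i (fl \<omega>) = gdot k n G i \<omega> + G i j0" for i \<omega>
  proof -
    have "gdot k n G i (fl \<omega>) = (\<Sum>j\<in>{k+1..n}. G i j * \<omega> j + (if j = j0 then G i j0 else 0))"
      unfolding gdot_def fl_def by (rule sum.cong) (auto simp: distrib_left simp del: add_bit_eq_xor mult_bit_eq_and)
    also have "\<dots> = gdot k n G i \<omega> + G i j0"
      using j0(1) by (simp add: sum.distrib gdot_def del: add_bit_eq_xor mult_bit_eq_and)
    finally show ?thesis .
  qed
  have Pfl: "P (fl \<omega>) = - P \<omega>" for \<omega>
  proof -
    have A: "(\<Prod>i\<in>{1..k}. v (\<gamma> i + gdot k n G i (fl \<omega>)) ^ bexp (b i))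
       = (\<Prod>i\<in>{1..k}. v (\<gamma> i + gdot k n G i \<omega>) ^ bexp (b i)) * sg (\<Sum>i\<in>{1..k}. b i * G i j0)"
    proof -
      have "(\<Prod>i\<in>{1..k}. v (\<gamma> i + gdot k n G i (fl \<omega>)) ^ bexp (b i))
         = (\<Prod>i\<in>{1..k}. v ((\<gamma> i + gdot k n G i \<omega>) + G i j0) ^ bexp (b i))"
        by (simp only: gd add.assoc)
      also have "\<dots> = (\<Prod>i\<in>{1..k}. v (\<gamma> i + gdot k n G i \<omega>) ^ bexp (b i) * sg (b i * G i j0))"
        by (simp only: vshift[of v, OF vv])
      also have "\<dots> = (\<Prod>i\<in>{1..k}. v (\<gamma> i + gdot k n G i \<omega>) ^ bexp (b i)) * sg (\<Sum>i\<in>{1..k}. b i * G i j0)"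
        by (simp only: prod.distrib sg_sum finite_atLeastAtMost)
      finally show ?thesis .
    qed
    have "(\<Prod>j\<in>{k+1..n}. v (fl \<omega> j) ^ bexp (b j))
       = (\<Prod>j\<in>{k+1..n}. v (\<omega> j + (if j = j0 then 1 else 0)) ^ bexp (b j))"
      by (rule prod.cong) (auto simp: fl_def)
    also have "\<dots> = (\<Prod>j\<in>{k+1..n}. v (\<omega> j) ^ bexp (b j)) * sg (\<Sum>j\<in>{k+1..n}. b j * (if j = j0 then 1 else 0))"
      by (simp only: vshift[of v, OF vv] prod.distrib sg_sum finite_atLeastAtMost)
    also have "(\<Sum>j\<in>{k+1..n}. b j * (if j = j0 then 1 else 0)) = b j0"
      using j0(1) by (simp add: if_distrib cong: if_cong del: add_bit_eq_xor mult_bit_eq_and)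
    finally have B: "(\<Prod>j\<in>{k+1..n}. v (fl \<omega> j) ^ bexp (b j)) = (\<Prod>j\<in>{k+1..n}. v (\<omega> j) ^ bexp (b j)) * sg (b j0)" .
    have "sg (\<Sum>i\<in>{1..k}. b i * G i j0) * sg (b j0) = sg (b j0 + (\<Sum>i\<in>{1..k}. b i * G i j0))"
      by (simp only: sg_add mult.commute)
    also have "\<dots> = -1" unfolding j0(2) by (simp add: sg_def)
    finally have m1: "sg (\<Sum>i\<in>{1..k}. b i * G i j0) * sg (b j0) = -1" .
    show ?thesis unfolding P_def A B
    proof -
      fix X Y :: real
      have "X * sg (\<Sum>i\<in>{1..k}. b i * G i j0) * (Y * sg (b j0)) = X * Y * (sg (\<Sum>i\<in>{1..k}. b i * G i j0) * sg (b j0))"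
        by (simp only: mult_ac)
      also have "\<dots> = - (X * Y)" using m1 by simp
      finally show "X * sg (\<Sum>i\<in>{1..k}. b i * G i j0) * (Y * sg (b j0)) = - (X * Y)" .
    qed
  qed
  have flfl: "fl (fl w) = w" for w by (simp add: fl_def add.assoc del: add_bit_eq_xor)
  have flV: "fl w \<in> ?V" if w: "w \<in> ?V" for w unfolding vecs_def
  proof (intro CollectI allI impI)
    fix i assume "i \<notin> {k+1..n}"
    then have "i \<noteq> j0" using j0(1) by blast
    then show "fl w i = 0" using w \<open>i \<notin> {k+1..n}\<close> by (simp add: fl_def vecs_def)
  qed
  have "sum P ?V = sum (\<lambda>\<omega>. P (fl \<omega>)) ?V"
    by (rule sum.reindex_bij_witness[where i=fl and j=fl]) (simp_all add: flfl flV[simplified])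
  also have "\<dots> = - sum P ?V" by (simp add: Pfl sum_negf)
  finally have "sum P ?V = 0" by simp
  then show ?thesis unfolding T_def P_def by simp
qed



lemma split_range: "k < n \<Longrightarrow> {1..n} = {1..k} \<union> {k+1..(n::nat)}" by auto

lemma (in prob_space) vv_lemma:
  fixes n :: nat and X :: "nat \<Rightarrow> 'a \<Rightarrow> bit"
  assumes n: "1 \<le> n" and meas: "\<forall>i\<in>{1..n}. X i \<in> measurable M (count_space UNIV)"
    and pv: "\<forall>i\<in>{1..n}. \<forall>x. prob {w \<in> space M. X i w = x} = 1/2 + v x"
  shows "v (x + 1) = - v x"
proof -
  have m1: "X 1 \<in> measurable M (count_space UNIV)" using meas n by auto
  have st: "{w \<in> space M. X 1 w = y} \<in> sets M" for y
  proof -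
    have "X 1 -` {y} \<inter> space M \<in> sets M" using measurable_sets[OF m1] by simp
    moreover have "X 1 -` {y} \<inter> space M = {w \<in> space M. X 1 w = y}" by auto
    ultimately show ?thesis by simp
  qed
  have U: "{w \<in> space M. X 1 w = 0} \<union> {w \<in> space M. X 1 w = 1} = space M" by auto
  have "prob {w \<in> space M. X 1 w = 0} + prob {w \<in> space M. X 1 w = 1} = prob (space M)"
  proof -
    have D: "{w \<in> space M. X 1 w = 0} \<inter> {w \<in> space M. X 1 w = 1} = {}" by auto
    show ?thesis using finite_measure_Union[OF st st D] U by simp
  qed
  then have "1/2 + v 0 + (1/2 + v 1) = 1" using pv n prob_space by auto
  then have "v 1 = - v 0" by simp
  then show ?thesis by (cases x) auto
qed

lemma (in prob_space) part1:
  assumes sys: "systematic k G" and kn: "k < n"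
    and meas: "\<forall>i\<in>{1..n}. X i \<in> measurable M (count_space UNIV)"
    and ind: "indep_vars (\<lambda>_. count_space UNIV) X {1..n}"
    and pv: "\<forall>i\<in>{1..n}. \<forall>x. prob {w \<in> space M. X i w = x} = 1/2 + v x"
    and g: "\<gamma> \<in> vecs {1..k}"
  shows "prob {w \<in> space M. \<forall>i\<in>{1..k}. Ybar n G X i w = \<gamma> i} = (\<Sum>b\<in>vecs {1..n}. T k n G v b \<gamma>)"
proof -
  define S where "S = {x\<in>vecs {1..n}. \<forall>i\<in>{1..k}. (\<Sum>j\<in>{1..n}. G i j * x j) = \<gamma> i}"
  define A where "A = (\<lambda>x. {w \<in> space M. \<forall>j\<in>{1..n}. X j w = x j})"
  have finS: "finite S" unfolding S_def using finite_vecs[of "{1..n}"] by simp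
  have E: "{w \<in> space M. \<forall>i\<in>{1..k}. Ybar n G X i w = \<gamma> i} = (\<Union>x\<in>S. A x)"
  proof (rule set_eqI)
    fix w
    show "w \<in> {w \<in> space M. \<forall>i\<in>{1..k}. Ybar n G X i w = \<gamma> i} \<longleftrightarrow> w \<in> (\<Union>x\<in>S. A x)"
    proof
      assume w: "w \<in> {w \<in> space M. \<forall>i\<in>{1..k}. Ybar n G X i w = \<gamma> i}"
      define x where "x = (\<lambda>j. if j \<in> {1..n} then X j w else 0)"
      have "x \<in> S" unfolding S_def
      proof (intro CollectI conjI ballI)
        show "x \<in> vecs {1..n}" by (simp add: x_def vecs_def)
        fix i assume i: "i \<in> {1..k}"
        have "(\<Sum>j\<in>{1..n}. G i j * x j) = Ybar n G X i w"
          unfolding Ybar_def by (rule sum.cong) (auto simp: x_def)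
        then show "(\<Sum>j\<in>{1..n}. G i j * x j) = \<gamma> i" using w i by simp
      qed
      moreover have "w \<in> A x" using w by (simp add: A_def x_def)
      ultimately show "w \<in> (\<Union>x\<in>S. A x)" by blast
    next
      assume "w \<in> (\<Union>x\<in>S. A x)"
      then obtain x where x: "x \<in> S" "w \<in> A x" by blast
      have "Ybar n G X i w = \<gamma> i" if i: "i \<in> {1..k}" for i
      proof -
        have "Ybar n G X i w = (\<Sum>j\<in>{1..n}. G i j * x j)"
          unfolding Ybar_def by (rule sum.cong) (use x in \<open>auto simp: A_def\<close>)
        then show ?thesis using x i by (simp add: S_def)
      qed
      then show "w \<in> {w \<in> space M. \<forall>i\<in>{1..k}. Ybar n G X i w = \<gamma> i}" using x by (simp add: A_def)
    qed
  qed
  have Aint: "A x = (\<Inter>j\<in>{1..n}. X j -` {x j} \<inter> space M)" for x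
    using kn by (auto simp: A_def)
  have Asets: "A x \<in> sets M" for x
  proof -
    have "(\<Inter>j\<in>{1..n}. X j -` {x j} \<inter> space M) \<in> sets M"
      using kn meas by (intro sets.finite_INT) (auto intro!: measurable_sets[where A="count_space UNIV"])
    then show ?thesis by (simp add: Aint)
  qed
  have disj: "disjoint_family_on A S"
    unfolding disjoint_family_on_def
  proof (intro ballI impI)
    fix x y assume xy: "x \<in> S" "y \<in> S" "x \<noteq> y"
    then obtain j where j: "x j \<noteq> y j" by (auto simp: fun_eq_iff)
    then have "j \<in> {1..n}" using xy by (auto simp: S_def vecs_def)
    then show "A x \<inter> A y = {}" using j by (auto simp: A_def)
  qed
  have pA: "prob (A x) = (\<Prod>j\<in>{1..n}. 1/2 + v (x j))" for x
  proof -
    have "prob (A x) = (\<Prod>j\<in>{1..n}. prob (X j -` {x j} \<inter> space M))"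
      unfolding Aint using kn by (intro indep_varsD_finite[OF ind]) auto
    also have "\<dots> = (\<Prod>j\<in>{1..n}. 1/2 + v (x j))"
    proof (rule prod.cong[OF refl])
      fix j assume "j \<in> {1..n}"
      moreover have "X j -` {x j} \<inter> space M = {w \<in> space M. X j w = x j}" by auto
      ultimately show "prob (X j -` {x j} \<inter> space M) = 1/2 + v (x j)" using pv by simp
    qed
    finally show ?thesis .
  qed
  have "prob {w \<in> space M. \<forall>i\<in>{1..k}. Ybar n G X i w = \<gamma> i} = (\<Sum>x\<in>S. prob (A x))"
    unfolding E using finS Asets disj by (intro finite_measure_finite_Union) auto
  also have "\<dots> = (\<Sum>x\<in>S. \<Prod>j\<in>{1..n}. 1/2 + v (x j))" by (simp add: pA)
  finally have P1: "prob {w \<in> space M. \<forall>i\<in>{1..k}. Ybar n G X i w = \<gamma> i} = (\<Sum>x\<in>S. \<Prod>j\<in>{1..n}. 1/2 + v (x j))" .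
  define h where "h = (\<lambda>\<omega> j. if j \<in> {1..k} then \<gamma> j + gdot k n G j \<omega> else \<omega> (j::nat))"
  define r where "r = (\<lambda>x j. if j \<in> {k+1..n} then x j else (0::bit))"
  let ?V = "vecs {k+1..n}"
  have sumG: "(\<Sum>j\<in>{1..n}. G i j * x j) = x i + gdot k n G i x" if i: "i \<in> {1..k}" for i x
  proof -
    have "(\<Sum>j\<in>{1..n}. G i j * x j) = (\<Sum>j\<in>{1..k}. G i j * x j) + (\<Sum>j\<in>{k+1..n}. G i j * x j)"
      unfolding split_range[OF kn] by (rule sum.union_disjoint) auto
    also have "(\<Sum>j\<in>{1..k}. G i j * x j) = (\<Sum>j\<in>{1..k}. if j = i then x i else 0)"
      by (rule sum.cong) (use sys i in \<open>auto simp: systematic_def\<close>)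
    also have "\<dots> = x i" using i by simp
    finally show ?thesis by (simp add: gdot_def)
  qed
  have gdot_cong: "gdot k n G i x = gdot k n G i y" if "\<forall>j\<in>{k+1..n}. x j = y j" for i x y
    unfolding gdot_def using that by (intro sum.cong) auto
  have hr: "h (r x) = x" if x: "x \<in> S" for x
  proof -
  have g1: "gdot k n G i (r x) = gdot k n G i x" for i by (rule gdot_cong) (simp add: r_def)
      show "h (r x) = x"
      proof
        fix j
        show "h (r x) j = x j"
        proof (cases "j \<in> {1..k}")
          case True
          then have "\<gamma> j = x j + gdot k n G j x" using x sumG by (simp add: S_def)
          then show ?thesis using True by (simp add: h_def g1 add.assoc)
        next
          case False
          then show ?thesis using x kn by (auto simp: h_def r_def S_def vecs_def)
        qed
      qed
  qed
  have reind: "(\<Sum>x\<in>S. \<Prod>j\<in>{1..n}. 1/2 + v (x j)) = (\<Sum>\<omega>\<in>?V. \<Prod>j\<in>{1..n}. 1/2 + v (h \<omega> j))"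
  proof (rule sum.reindex_bij_witness[where i=h and j=r])
    fix x assume x: "x \<in> S"
    show "r x \<in> ?V" by (simp add: r_def vecs_def)
    show "h (r x) = x" by (rule hr[OF x])
  next
    fix \<omega> assume w: "\<omega> \<in> ?V"
    show "r (h \<omega>) = \<omega>"
    proof
      fix j show "r (h \<omega>) j = \<omega> j" using w by (auto simp: r_def h_def vecs_def)
    qed
    have hw: "\<forall>j\<in>{k+1..n}. h \<omega> j = \<omega> j" by (auto simp: h_def)
    show "h \<omega> \<in> S" unfolding S_def
    proof (intro CollectI conjI ballI)
      show "h \<omega> \<in> vecs {1..n}" using w kn by (auto simp: h_def vecs_def)
      fix i assume i: "i \<in> {1..k}"
      show "(\<Sum>j\<in>{1..n}. G i j * h \<omega> j) = \<gamma> i"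
      proof -
        have "(\<Sum>j\<in>{1..n}. G i j * h \<omega> j) = h \<omega> i + gdot k n G i (h \<omega>)" by (rule sumG[OF i])
        also have "gdot k n G i (h \<omega>) = gdot k n G i \<omega>" by (rule gdot_cong[OF hw])
        also have "h \<omega> i = \<gamma> i + gdot k n G i \<omega>" using i by (simp add: h_def)
        finally show ?thesis by (simp add: add.assoc)
      qed
    qed
  qed (simp add: hr)
  have T_eq: "T k n G v b \<gamma> = (\<Sum>\<omega>\<in>?V. 1 / 2 ^ card {t\<in>{1..n}. b t \<noteq> 1} * (\<Prod>t\<in>{1..n}. v (h \<omega> t) ^ bexp (b t)))" for b
  proof -
    have c: "card {t\<in>{1..n}. b t \<noteq> 1} = n - hweight n b"
    proof -
      have "{t\<in>{1..n}. b t \<noteq> 1} = {1..n} - {t\<in>{1..n}. b t = 1}" by auto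
      moreover have "card ({1..n} - {t\<in>{1..n}. b t = 1}) = card {1..n} - card {t\<in>{1..n}. b t = 1}"
        by (rule card_Diff_subset) auto
      ultimately show ?thesis unfolding hweight_def by simp
    qed
    have p: "(\<Prod>t\<in>{1..n}. v (h \<omega> t) ^ bexp (b t)) =
       (\<Prod>i\<in>{1..k}. v (\<gamma> i + gdot k n G i \<omega>) ^ bexp (b i)) * (\<Prod>j\<in>{k+1..n}. v (\<omega> j) ^ bexp (b j))" for \<omega>
    proof -
      have "(\<Prod>t\<in>{1..n}. v (h \<omega> t) ^ bexp (b t)) = (\<Prod>t\<in>{1..k}. v (h \<omega> t) ^ bexp (b t)) * (\<Prod>t\<in>{k+1..n}. v (h \<omega> t) ^ bexp (b t))"
        unfolding split_range[OF kn] by (rule prod.union_disjoint) auto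
      also have "(\<Prod>t\<in>{1..k}. v (h \<omega> t) ^ bexp (b t)) = (\<Prod>i\<in>{1..k}. v (\<gamma> i + gdot k n G i \<omega>) ^ bexp (b i))"
        by (rule prod.cong) (auto simp: h_def)
      also have "(\<Prod>t\<in>{k+1..n}. v (h \<omega> t) ^ bexp (b t)) = (\<Prod>j\<in>{k+1..n}. v (\<omega> j) ^ bexp (b j))"
        by (rule prod.cong) (auto simp: h_def)
      finally show ?thesis .
    qed
    show ?thesis unfolding T_def c p by (simp add: sum_distrib_left)
  qed
  have "(\<Sum>\<omega>\<in>?V. \<Prod>j\<in>{1..n}. 1/2 + v (h \<omega> j))
      = (\<Sum>\<omega>\<in>?V. \<Sum>b\<in>vecs {1..n}. 1 / 2 ^ card {t\<in>{1..n}. b t \<noteq> 1} * (\<Prod>t\<in>{1..n}. v (h \<omega> t) ^ bexp (b t)))"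
    by (simp add: expand split_prod)
  also have "\<dots> = (\<Sum>b\<in>vecs {1..n}. T k n G v b \<gamma>)"
    by (subst sum.swap) (simp add: T_eq)
  finally show ?thesis using P1 reind by simp
qed



lemma part3:
  assumes "k < n"
  shows "T k n G v (\<lambda>_. 0) \<gamma> = 1 / 2 ^ k"
proof -
  have hw: "hweight n (\<lambda>_. 0) = 0" by (simp add: hweight_def)
  have cv0: "card (vecs {k+1..n}) = 2 ^ card {k+1..n}" by (rule card_vecs) simp
  have cv: "card (vecs {Suc k..n}) = 2 ^ (n - k)" using cv0 by simp
  have "T k n G v (\<lambda>_. 0) \<gamma> = 1 / 2 ^ n * 2 ^ (n - k)"
    unfolding T_def hw by (simp add: bexp_def cv)
  also have "(2::real) ^ n = 2 ^ k * 2 ^ (n - k)"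
    using assms by (simp add: power_add[symmetric])
  finally show ?thesis by simp
qed

theorem mainTheorem2:
  fixes M :: "'a measure" and X :: "nat \<Rightarrow> 'a \<Rightarrow> bit" and v :: "bit \<Rightarrow> real"
    and G :: "nat \<Rightarrow> nat \<Rightarrow> bit" and k n :: nat
  assumes "prob_space M"
    and "k < n"
    and "systematic k G"
    and "\<forall>i\<in>{1..n}. X i \<in> measurable M (count_space UNIV)"
    and "prob_space.indep_vars M (\<lambda>_. count_space UNIV) X {1..n}"
    and "\<forall>i\<in>{1..n}. \<forall>x. measure M {\<omega> \<in> space M. X i \<omega> = x} = 1/2 + v x"
  shows "(\<forall>\<gamma>\<in>vecs {1..k}.
           measure M {\<omega> \<in> space M. \<forall>i\<in>{1..k}. Ybar n G X i \<omega> = \<gamma> i}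
             = (\<Sum>b\<in>vecs {1..n}. T k n G v b \<gamma>))
         \<and> (\<forall>b\<in>vecs {1..n} - code k n G. \<forall>\<gamma>\<in>vecs {1..k}. T k n G v b \<gamma> = 0)
         \<and> (\<forall>\<gamma>\<in>vecs {1..k}. T k n G v (\<lambda>_. 0) \<gamma> = 1 / 2 ^ k)
         \<and> (\<forall>\<gamma>\<in>vecs {1..k}.
           measure M {\<omega> \<in> space M. \<forall>i\<in>{1..k}. Ybar n G X i \<omega> = \<gamma> i} - 1 / 2 ^ k
             = (\<Sum>b\<in>code k n G - {\<lambda>_. 0}. T k n G v b \<gamma>))"
proof -
  interpret prob_space M by fact
  have n1: "1 \<le> n" using assms(2) by simp
  have vv: "\<And>x. v (x + 1) = - v x" by (rule vv_lemma[OF n1 assms(4) assms(6)])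
  have P1: "\<forall>\<gamma>\<in>vecs {1..k}. measure M {\<omega> \<in> space M. \<forall>i\<in>{1..k}. Ybar n G X i \<omega> = \<gamma> i}
             = (\<Sum>b\<in>vecs {1..n}. T k n G v b \<gamma>)"
    using part1[OF assms(3) assms(2) assms(4) assms(5) assms(6)] by blast
  have P2: "\<forall>b\<in>vecs {1..n} - code k n G. \<forall>\<gamma>\<in>vecs {1..k}. T k n G v b \<gamma> = 0"
    using part2[of k G n v, OF assms(3) assms(2) vv] by blast
  have P3: "\<forall>\<gamma>\<in>vecs {1..k}. T k n G v (\<lambda>_. 0) \<gamma> = 1 / 2 ^ k"
    using part3[OF assms(2)] by blast
  have P4: "\<forall>\<gamma>\<in>vecs {1..k}.
           measure M {\<omega> \<in> space M. \<forall>i\<in>{1..k}. Ybar n G X i \<omega> = \<gamma> i} - 1 / 2 ^ k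
             = (\<Sum>b\<in>code k n G - {\<lambda>_. 0}. T k n G v b \<gamma>)"
  proof
    fix \<gamma> assume g: "\<gamma> \<in> vecs {1..k}"
    have fc: "finite (code k n G)"
      using finite_subset[OF code_sub finite_vecs[of "{1..n}"]] by simp
    have "(\<Sum>b\<in>vecs {1..n}. T k n G v b \<gamma>) = (\<Sum>b\<in>code k n G. T k n G v b \<gamma>)"
      by (rule sum.mono_neutral_right) (use P2 g code_sub finite_vecs in auto)
    also have "\<dots> = T k n G v (\<lambda>_. 0) \<gamma> + (\<Sum>b\<in>code k n G - {\<lambda>_. 0}. T k n G v b \<gamma>)"
      by (rule sum.remove[OF fc zero_in_code])
    finally show "measure M {\<omega> \<in> space M. \<forall>i\<in>{1..k}. Ybar n G X i \<omega> = \<gamma> i} - 1 / 2 ^ k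
             = (\<Sum>b\<in>code k n G - {\<lambda>_. 0}. T k n G v b \<gamma>)"
      using P1 P3 g by simp
  qed
  show ?thesis using P1 P2 P3 P4 by blast
qed


end
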